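(* Suppose $\mathcal L\subsetneq\mathcal K\subseteq\{1,\dots,n\}$ and $Q$ is a prime ideal of $R$ containing $L_{\mathcal L}+I(A_{\mathcal K})$. Then there is some $\mathcal K'$ with $\mathcal L\subseteq\mathcal K'\subseteq\mathcal K$ and $|\mathcal K'|+1=|\mathcal K|$ such that $L_{\mathcal K'}\subseteq Q$.
   Context: $\mathbb K$ is a field, $R=\mathbb K[x_{i_1,\dots,i_n}:1\le i_j\le a_j]$, $A=(x_{i_1,\dots,i_n})$ the generic table. For a tuple $\sigma$ with $\sigma_j\in\{1,\dots,a_j\}\cup\{+\}$, $x_\sigma$ is the sum of all $x_{i_1,\dots,i_n}$ with $i_j=\sigma_j$ whenever $\sigma_j\ne+$. For $\mathscr J=\{j_1<\dots<j_m\}\subseteq\{1,\dots,n\}$ the margin $A_{\mathscr J}$ is the table whose $(i_1,\dots,i_m)$ entry is $x_\sigma$ with $\sigma_{j_r}=i_r$, $\sigma_j=+$ for $j\notin\mathscr J$; $L_{\mathscr J}$ is the ideal generated by the entries of $A_{\mathscr J}$. For a table $B$ with entries in $R$, $I(B)$ is the ideal generated by its generalized $2\times2$ minors $\det\begin{pmatrix} b_{i_1,\dots,i_m} & b_{j_1,\dots,j_{l-1},i_l,j_{l+1},\dots,j_m}\\ b_{i_1,\dots,i_{l-1},j_l,i_{l+1},\dots,i_m} & b_{j_1,\dots,j_m}\end{pmatrix}$. *)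

theory Defs
  imports Main "HOL-Library.Poly_Mapping"
begin

text \<open>Multi-indices (i_1,...,i_n) are encoded as functions f :: nat => nat with
  f j in {1..a j} for j in {1..n} and f j = 0 for j outside {1..n}.\<close>

type_synonym 'k mpoly = "((nat \<Rightarrow> nat) \<Rightarrow>\<^sub>0 nat) \<Rightarrow>\<^sub>0 'k"

definition idx :: "nat \<Rightarrow> (nat \<Rightarrow> nat) \<Rightarrow> (nat \<Rightarrow> nat) set" where
  "idx n a = {f. (\<forall>j\<in>{1..n}. 1 \<le> f j \<and> f j \<le> a j) \<and> (\<forall>j. j \<notin> {1..n} \<longrightarrow> f j = 0)}"

definition Var :: "(nat \<Rightarrow> nat) \<Rightarrow> 'k::comm_ring_1 mpoly" where
  "Var f = Poly_Mapping.single (Poly_Mapping.single f 1) 1"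

text \<open>The polynomial ring R = K[x_f : f in idx n a], as a subset of the polynomial
  ring in all variables indexed by nat => nat.\<close>
definition Rring :: "nat \<Rightarrow> (nat \<Rightarrow> nat) \<Rightarrow> 'k::comm_ring_1 mpoly set" where
  "Rring n a = {p. \<forall>m\<in>Poly_Mapping.keys p. Poly_Mapping.keys m \<subseteq> idx n a}"

definition ideal_gen :: "'k::comm_ring_1 mpoly set \<Rightarrow> 'k mpoly set \<Rightarrow> 'k mpoly set" where
  "ideal_gen R S = {p. \<exists>F c. finite F \<and> F \<subseteq> S \<and> (\<forall>s\<in>F. c s \<in> R) \<and> p = (\<Sum>s\<in>F. c s * s)}"

definition is_ideal :: "'k::comm_ring_1 mpoly set \<Rightarrow> 'k mpoly set \<Rightarrow> bool" where
  "is_ideal R I \<longleftrightarrow> I \<subseteq> R \<and> 0 \<in> I \<and> (\<forall>x\<in>I. \<forall>y\<in>I. x + y \<in> I)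
     \<and> (\<forall>r\<in>R. \<forall>x\<in>I. r * x \<in> I)"

definition is_prime_ideal :: "'k::comm_ring_1 mpoly set \<Rightarrow> 'k mpoly set \<Rightarrow> bool" where
  "is_prime_ideal R Q \<longleftrightarrow> is_ideal R Q \<and> Q \<noteq> R
     \<and> (\<forall>x\<in>R. \<forall>y\<in>R. x * y \<in> Q \<longrightarrow> x \<in> Q \<or> y \<in> Q)"

text \<open>Entry of the margin A_J at the position given by the restriction of f to J:
  the sum of all x_g with g j = f j for all j in J.\<close>
definition marg :: "nat \<Rightarrow> (nat \<Rightarrow> nat) \<Rightarrow> nat set \<Rightarrow> (nat \<Rightarrow> nat) \<Rightarrow> 'k::comm_ring_1 mpoly" where
  "marg n a J f = (\<Sum>g\<in>{g\<in>idx n a. \<forall>j\<in>J. g j = f j}. Var g)"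

definition Lmarg :: "nat \<Rightarrow> (nat \<Rightarrow> nat) \<Rightarrow> nat set \<Rightarrow> 'k::comm_ring_1 mpoly set" where
  "Lmarg n a J = ideal_gen (Rring n a) {marg n a J f | f. f \<in> idx n a}"

definition Imarg :: "nat \<Rightarrow> (nat \<Rightarrow> nat) \<Rightarrow> nat set \<Rightarrow> 'k::comm_ring_1 mpoly set" where
  "Imarg n a J = ideal_gen (Rring n a)
     {marg n a J f * marg n a J g - marg n a J (g(l := f l)) * marg n a J (f(l := g l))
       | f g l. f \<in> idx n a \<and> g \<in> idx n a \<and> l \<in> J}"

end

theory Submission
  imports Defs
begin

lemma finite_idx: "finite (idx n a)"
proof -
  let ?M = "\<Sum>j\<in>{1..n}. a j"
  have "idx n a \<subseteq> {f. \<forall>x. (x \<in> {1..n} \<longrightarrow> f x \<in> {0..?M}) \<and> (x \<notin> {1..n} \<longrightarrow> f x = 0)}"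
  proof
    fix f assume f: "f \<in> idx n a"
    have "\<And>x. x \<in> {1..n} \<Longrightarrow> f x \<le> ?M"
    proof -
      fix x assume x: "x \<in> {1..n}"
      have "f x \<le> a x" using f x unfolding idx_def by auto
      also have "a x \<le> ?M" by (rule member_le_sum) (use x in auto)
      finally show "f x \<le> ?M" .
    qed
    then show "f \<in> {f. \<forall>x. (x \<in> {1..n} \<longrightarrow> f x \<in> {0..?M}) \<and> (x \<notin> {1..n} \<longrightarrow> f x = 0)}"
      using f unfolding idx_def by auto
  qed
  moreover have "finite {f. \<forall>x. (x \<in> {1..n} \<longrightarrow> f x \<in> {0..?M}) \<and> (x \<notin> {1..n} \<longrightarrow> f x = (0::nat))}"
    by (rule finite_set_of_finite_funs) auto
  ultimately show ?thesis by (rule finite_subset)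
qed

lemma mix_idx: "x \<in> idx n a \<Longrightarrow> y \<in> idx n a \<Longrightarrow> (\<lambda>i. if P i then y i else x i) \<in> idx n a"
  unfolding idx_def by auto

lemma one_R: "(1::'k::field mpoly) \<in> Rring n a"
  unfolding Rring_def by simp

lemma Var_R: "g \<in> idx n a \<Longrightarrow> (Var g :: 'k::field mpoly) \<in> Rring n a"
  unfolding Rring_def Var_def by simp

lemma add_R: "p \<in> Rring n a \<Longrightarrow> q \<in> Rring n a \<Longrightarrow> p + q \<in> Rring n a"
  unfolding Rring_def using keys_add[of p q] by blast

lemma sum_R: "(\<And>i. i \<in> A \<Longrightarrow> f i \<in> Rring n a) \<Longrightarrow> sum f A \<in> Rring n a"
proof (induction A rule: infinite_finite_induct)
  case (infinite A) then show ?case by (simp add: Rring_def)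
next
  case empty then show ?case by (simp add: Rring_def)
next
  case (insert x F) then show ?case by (simp add: add_R)
qed

lemma marg_R: "(marg n a J f :: 'k::field mpoly) \<in> Rring n a"
  unfolding marg_def by (rule sum_R) (auto intro: Var_R)

lemma sum_Q:
  assumes "is_ideal R Q" and "\<And>i. i \<in> A \<Longrightarrow> f i \<in> Q"
  shows "sum f A \<in> Q"
  using assms(2)
proof (induction A rule: infinite_finite_induct)
  case (infinite A) then show ?case using assms(1) by (simp add: is_ideal_def)
next
  case empty then show ?case using assms(1) by (simp add: is_ideal_def)
next
  case (insert x F) then show ?case using assms(1) by (simp add: is_ideal_def)
qed

lemma gen_sub:
  assumes "is_ideal R Q" "S \<subseteq> Q"
  shows "ideal_gen R S \<subseteq> Q"
proof
  fix p assume "p \<in> ideal_gen R S"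
  then obtain F c where "F \<subseteq> S" "\<forall>s\<in>F. c s \<in> R" "p = (\<Sum>s\<in>F. c s * s)"
    unfolding ideal_gen_def by blast
  then show "p \<in> Q" using assms by (auto intro!: sum_Q[OF assms(1)] simp: is_ideal_def)
qed

lemma gen_in:
  assumes "1 \<in> R" "s \<in> S"
  shows "s \<in> ideal_gen R S"
  unfolding ideal_gen_def
  by (rule CollectI, rule exI[of _ "{s}"], rule exI[of _ "\<lambda>_. 1"]) (use assms in auto)


definition sw :: "nat set \<Rightarrow> (nat \<Rightarrow> nat) \<Rightarrow> (nat \<Rightarrow> nat) \<Rightarrow> (nat \<Rightarrow> nat)" where
  "sw D x y = (\<lambda>i. if i \<in> D then y i else x i)"

lemma sw_idx: "x \<in> idx n a \<Longrightarrow> y \<in> idx n a \<Longrightarrow> sw D x y \<in> idx n a"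
  unfolding sw_def by (rule mix_idx)

lemma swap_Q:
  fixes Q :: "'k::field mpoly set"
  assumes Qi: "is_ideal (Rring n a) Q" and IQ: "Imarg n a K \<subseteq> Q"
    and D: "finite D" "D \<subseteq> K" and f: "f \<in> idx n a" and g: "g \<in> idx n a"
  shows "marg n a K f * marg n a K g - marg n a K (sw D f g) * marg n a K (sw D g f) \<in> Q"
  using D
proof (induction D rule: finite_induct)
  case empty
  have "sw {} f g = f" "sw {} g f = g" unfolding sw_def by auto
  then show ?case using Qi by (simp add: is_ideal_def)
next
  case (insert l D0)
  define F where "F = sw D0 f g"
  define G where "G = sw D0 g f"
  have FG: "F \<in> idx n a" "G \<in> idx n a" unfolding F_def G_def using f g by (auto intro: sw_idx)
  have e1: "G(l := F l) = sw (insert l D0) g f" unfolding F_def G_def sw_def using insert(2) by auto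
  have e2: "F(l := G l) = sw (insert l D0) f g" unfolding F_def G_def sw_def using insert(2) by auto
  have "(marg n a K F * marg n a K G - marg n a K (G(l := F l)) * marg n a K (F(l := G l)) :: 'k mpoly) \<in> Imarg n a K"
  proof -
    let ?X = "marg n a K F * marg n a K G - marg n a K (G(l := F l)) * marg n a K (F(l := G l)) :: 'k mpoly"
    have mem: "?X \<in> {marg n a K f * marg n a K g - marg n a K (g(l := f l)) * marg n a K (f(l := g l))
       | f g l. f \<in> idx n a \<and> g \<in> idx n a \<and> l \<in> K}"
      using FG insert(4) by auto
    show ?thesis unfolding Imarg_def by (rule gen_in[OF one_R mem])
  qed
  then have m: "marg n a K F * marg n a K G - marg n a K (sw (insert l D0) g f) * marg n a K (sw (insert l D0) f g) \<in> Q"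
    using IQ e1 e2 by auto
  have ih: "marg n a K f * marg n a K g - marg n a K F * marg n a K G \<in> Q"
    using insert F_def G_def by auto
  have "(marg n a K f * marg n a K g - marg n a K F * marg n a K G) +
     (marg n a K F * marg n a K G - marg n a K (sw (insert l D0) g f) * marg n a K (sw (insert l D0) f g)) \<in> Q"
    using Qi ih m unfolding is_ideal_def by blast
  moreover have "(marg n a K f * marg n a K g - marg n a K F * marg n a K G) +
     (marg n a K F * marg n a K G - marg n a K (sw (insert l D0) g f) * marg n a K (sw (insert l D0) f g))
     = marg n a K f * marg n a K g - marg n a K (sw (insert l D0) f g) * marg n a K (sw (insert l D0) g f)"
    by (simp add: algebra_simps)
  ultimately show ?case by (simp add: mult.commute)
qed

definition Cset :: "nat \<Rightarrow> (nat \<Rightarrow> nat) \<Rightarrow> nat set \<Rightarrow> (nat \<Rightarrow> nat) \<Rightarrow> nat set \<Rightarrow> (nat \<Rightarrow> nat) \<Rightarrow> (nat \<Rightarrow> nat) set" where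
  "Cset n a K c S f = {f' \<in> idx n a. (\<forall>j\<in>S. f' j = f j) \<and> (\<forall>j\<in>{1..n} - K. f' j = c j)}"

lemma rep:
  assumes SK: "S \<subseteq> K" and c: "c \<in> idx n a"
  shows "(marg n a S f :: 'k::comm_ring_1 mpoly) = (\<Sum>f'\<in>Cset n a K c S f. marg n a K f')"
proof -
  define A where "A = {g \<in> idx n a. \<forall>j\<in>S. g j = f j}"
  define r where "r = (\<lambda>g. (\<lambda>i. if i \<in> K then g i else c i))"
  have fA: "finite A" unfolding A_def using finite_idx by auto
  have fC: "finite (Cset n a K c S f)" unfolding Cset_def using finite_idx by auto
  have img: "r ` A \<subseteq> Cset n a K c S f"
  proof
    fix y assume "y \<in> r ` A"
    then obtain g where g: "g \<in> A" "y = r g" by auto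
    have "r g \<in> idx n a" unfolding r_def using mix_idx[of c n a g "\<lambda>i. i \<in> K"] g c A_def by auto
    then show "y \<in> Cset n a K c S f" using g SK unfolding Cset_def A_def r_def by auto
  qed
  have cls: "{x. x \<in> A \<and> r x = y} = {x \<in> idx n a. \<forall>j\<in>K. x j = y j}" if y: "y \<in> Cset n a K c S f" for y
  proof
    show "{x. x \<in> A \<and> r x = y} \<subseteq> {x \<in> idx n a. \<forall>j\<in>K. x j = y j}"
      unfolding A_def r_def by (auto dest: fun_cong)
  next
    show "{x \<in> idx n a. \<forall>j\<in>K. x j = y j} \<subseteq> {x. x \<in> A \<and> r x = y}"
    proof
      fix x assume x: "x \<in> {x \<in> idx n a. \<forall>j\<in>K. x j = y j}"
      have "r x = y"
      proof
        fix i show "r x i = y i"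
        proof (cases "i \<in> K")
          case True then show ?thesis using x unfolding r_def by auto
        next
          case False
          show ?thesis
          proof (cases "i \<in> {1..n}")
            case True then show ?thesis using False y unfolding r_def Cset_def by auto
          next
            case F2: False
            have "c i = 0" using c F2 unfolding idx_def by blast
            moreover have "y i = 0" using y F2 unfolding Cset_def idx_def by blast
            ultimately show ?thesis using False unfolding r_def by auto
          qed
        qed
      qed
      moreover have "x \<in> A" using x y SK unfolding A_def Cset_def by auto
      ultimately show "x \<in> {x. x \<in> A \<and> r x = y}" by auto
    qed
  qed
  have "marg n a S f = (\<Sum>g\<in>A. Var g)" unfolding marg_def A_def by simp
  also have "\<dots> = (\<Sum>y\<in>Cset n a K c S f. \<Sum>x\<in>{x. x \<in> A \<and> r x = y}. Var x)"
    by (rule sum.group[OF fA fC img, symmetric])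
  also have "\<dots> = (\<Sum>f'\<in>Cset n a K c S f. marg n a K f')"
    by (rule sum.cong) (auto simp: cls marg_def)
  finally show ?thesis .
qed


lemma sw_sw1: "sw D (sw D x y) (sw D y x) = x"
  unfolding sw_def by auto

lemma lattice:
  fixes Q :: "'k::field mpoly set"
  assumes Qi: "is_ideal (Rring n a) Q" and IQ: "Imarg n a K \<subseteq> Q"
    and Kn: "K \<subseteq> {1..n}" and SK: "S \<subseteq> K" and TK: "T \<subseteq> K" and c: "c \<in> idx n a"
  shows "marg n a S f * marg n a T g - marg n a (S \<union> T) (sw (T - S) f g) * marg n a (S \<inter> T) g \<in> Q"
proof -
  define D where "D = T - S"
  define h where "h = sw D f g"
  define b :: "(nat \<Rightarrow> nat) \<Rightarrow> 'k mpoly" where "b = marg n a K"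
  define P where "P = Cset n a K c S f \<times> Cset n a K c T g"
  define P' where "P' = Cset n a K c (S \<union> T) h \<times> Cset n a K c (S \<inter> T) g"
  define \<sigma> where "\<sigma> = (\<lambda>(x, y). (sw D x y, sw D y x))"
  have fD: "finite D" "D \<subseteq> K" unfolding D_def using Kn TK finite_subset[of K "{1..n}"] by (auto intro: finite_subset[of "T - S" K])
  have img1: "\<sigma> ` P \<subseteq> P'"
  proof
    fix p assume "p \<in> \<sigma> ` P"
    then obtain x y where xy: "x \<in> Cset n a K c S f" "y \<in> Cset n a K c T g" "p = \<sigma> (x, y)"
      unfolding P_def by auto
    have "x \<in> idx n a" "y \<in> idx n a" using xy unfolding Cset_def by auto
    then have "sw D x y \<in> idx n a" "sw D y x \<in> idx n a" by (auto intro: sw_idx)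
    then show "p \<in> P'" using xy SK TK unfolding P'_def \<sigma>_def Cset_def h_def D_def sw_def by auto
  qed
  have img2: "\<sigma> ` P' \<subseteq> P"
  proof
    fix p assume "p \<in> \<sigma> ` P'"
    then obtain x y where xy: "x \<in> Cset n a K c (S \<union> T) h" "y \<in> Cset n a K c (S \<inter> T) g" "p = \<sigma> (x, y)"
      unfolding P'_def by auto
    have "x \<in> idx n a" "y \<in> idx n a" using xy unfolding Cset_def by auto
    then have "sw D x y \<in> idx n a" "sw D y x \<in> idx n a" by (auto intro: sw_idx)
    then show "p \<in> P" using xy SK TK unfolding P_def \<sigma>_def Cset_def h_def D_def sw_def by auto
  qed
  have inv: "\<sigma> (\<sigma> p) = p" for p
    unfolding \<sigma>_def by (cases p) (simp add: sw_sw1)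
  have bij: "bij_betw \<sigma> P P'"
    by (rule bij_betw_byWitness[where f'=\<sigma>]) (use inv img1 img2 in auto)
  have prod: "(\<Sum>x\<in>A. b x) * (\<Sum>y\<in>B. b y) = (\<Sum>p\<in>A \<times> B. b (fst p) * b (snd p))" for A B
    by (simp add: sum_product sum.cartesian_product case_prod_beta)
  have e1: "marg n a S f * marg n a T g = (\<Sum>p\<in>P. b (fst p) * b (snd p))"
    unfolding P_def b_def by (simp add: rep[OF SK c] rep[OF TK c] prod[unfolded b_def])
  have SUT: "S \<union> T \<subseteq> K" "S \<inter> T \<subseteq> K" using SK TK by auto
  have e2: "marg n a (S \<union> T) h * marg n a (S \<inter> T) g = (\<Sum>p\<in>P'. b (fst p) * b (snd p))"
    unfolding P'_def b_def by (simp add: rep[OF SUT(1) c] rep[OF SUT(2) c] prod[unfolded b_def])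
  also have "\<dots> = (\<Sum>p\<in>P. b (fst (\<sigma> p)) * b (snd (\<sigma> p)))"
    using sum.reindex_bij_betw[OF bij, of "\<lambda>p. b (fst p) * b (snd p)"] by simp
  finally have e2': "marg n a (S \<union> T) h * marg n a (S \<inter> T) g = (\<Sum>p\<in>P. b (fst (\<sigma> p)) * b (snd (\<sigma> p)))" .
  have "(\<Sum>p\<in>P. b (fst p) * b (snd p) - b (fst (\<sigma> p)) * b (snd (\<sigma> p))) \<in> Q"
  proof (rule sum_Q[OF Qi])
    fix p assume "p \<in> P"
    then have "fst p \<in> idx n a" "snd p \<in> idx n a" unfolding P_def Cset_def by auto
    from swap_Q[OF Qi IQ fD this] show "b (fst p) * b (snd p) - b (fst (\<sigma> p)) * b (snd (\<sigma> p)) \<in> Q"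
      unfolding b_def \<sigma>_def by (simp add: case_prod_beta)
  qed
  then show ?thesis using e1 e2' unfolding h_def D_def by (simp add: sum_subtractf)
qed


lemma step:
  fixes Q :: "'k::field mpoly set"
  assumes pr: "is_prime_ideal (Rring n a) Q" and IQ: "Imarg n a K \<subseteq> Q"
    and Kn: "K \<subseteq> {1..n}" and LK: "insert j L \<subseteq> K" and jL: "j \<notin> L"
    and LQ: "Lmarg n a L \<subseteq> Q" and g: "g \<in> idx n a"
    and ng: "marg n a (insert j L) g \<notin> Q"
  shows "Lmarg n a (K - {j}) \<subseteq> Q"
proof -
  have Qi: "is_ideal (Rring n a) Q" using pr unfolding is_prime_ideal_def by auto
  have "{marg n a (K - {j}) f | f. f \<in> idx n a} \<subseteq> Q"
  proof
    fix p :: "'k mpoly" assume "p \<in> {marg n a (K - {j}) f | f. f \<in> idx n a}"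
    then obtain f where f: "f \<in> idx n a" "p = marg n a (K - {j}) f" by auto
    have S1: "K - {j} \<subseteq> K" by auto
    from lattice[OF Qi IQ Kn S1 LK g, of f g]
    have lat: "marg n a (K - {j}) f * marg n a (insert j L) g -
        marg n a (K - {j} \<union> insert j L) (sw (insert j L - (K - {j})) f g) * marg n a ((K - {j}) \<inter> insert j L) g \<in> Q" .
    have "(K - {j}) \<inter> insert j L = L" using LK jL by auto
    moreover have mem: "(marg n a L g :: 'k mpoly) \<in> {marg n a L f | f. f \<in> idx n a}" using g by auto
    have "(marg n a L g :: 'k mpoly) \<in> Q"
      using gen_in[OF one_R mem] LQ unfolding Lmarg_def by auto
    ultimately have "marg n a (K - {j} \<union> insert j L) (sw (insert j L - (K - {j})) f g) * marg n a ((K - {j}) \<inter> insert j L) g \<in> Q"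
      using Qi marg_R unfolding is_ideal_def by metis
    with lat have "marg n a (K - {j}) f * marg n a (insert j L) g \<in> Q"
      using Qi unfolding is_ideal_def by (metis diff_add_cancel)
    then show "p \<in> Q" using pr ng marg_R f unfolding is_prime_ideal_def by blast
  qed
  then show ?thesis unfolding Lmarg_def by (rule gen_sub[OF Qi])
qed

lemma main_aux:
  fixes Q :: "'k::field mpoly set"
  assumes pr: "is_prime_ideal (Rring n a) Q" and IQ: "Imarg n a K \<subseteq> Q"
    and Kn: "K \<subseteq> {1..n}"
  shows "L \<subset> K \<Longrightarrow> Lmarg n a L \<subseteq> Q \<Longrightarrow>
    \<exists>K'. L \<subseteq> K' \<and> K' \<subseteq> K \<and> card K' + 1 = card K \<and> Lmarg n a K' \<subseteq> Q"
proof (induction "card (K - L)" arbitrary: L rule: less_induct)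
  case less
  have fK: "finite K" using Kn finite_subset by blast
  obtain j where j: "j \<in> K" "j \<notin> L" using less.prems(1) by auto
  have fL: "finite L" using less.prems(1) fK finite_subset by auto
  show ?case
  proof (cases "insert j L = K")
    case True
    then show ?thesis using less.prems j fL by (intro exI[of _ L]) auto
  next
    case False
    then have sub: "insert j L \<subset> K" using j less.prems(1) by auto
    show ?thesis
    proof (cases "Lmarg n a (insert j L) \<subseteq> Q")
      case True
      have "card (K - insert j L) < card (K - L)"
        using j fK by (intro psubset_card_mono) auto
      from less.hyps[OF this sub True] show ?thesis by auto
    next
      case False
      have Qi: "is_ideal (Rring n a) Q" using pr unfolding is_prime_ideal_def by auto
      have "\<not> {marg n a (insert j L) f | f. f \<in> idx n a} \<subseteq> Q"
        using False gen_sub[OF Qi] unfolding Lmarg_def by blast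
      then obtain g where g: "g \<in> idx n a" "marg n a (insert j L) g \<notin> Q" by auto
      have "Lmarg n a (K - {j}) \<subseteq> Q"
        using step[OF pr IQ Kn _ j(2) less.prems(2) g] sub by auto
      moreover have "card (K - {j}) + 1 = card K" using j fK
        by (simp add: card_Diff_singleton) (metis card_gt_0_iff empty_iff Suc_pred)
      ultimately show ?thesis using j less.prems(1) by (intro exI[of _ "K - {j}"]) auto
    qed
  qed
qed

theorem corollary6p2:
  fixes n :: nat and a :: "nat \<Rightarrow> nat" and \<L> \<K> :: "nat set"
    and Q :: "'k::field mpoly set"
  assumes "\<L> \<subset> \<K>" and "\<K> \<subseteq> {1..n}"
    and "is_prime_ideal (Rring n a) Q"
    and "Lmarg n a \<L> \<subseteq> Q" and "Imarg n a \<K> \<subseteq> Q"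
  shows "\<exists>\<K>'. \<L> \<subseteq> \<K>' \<and> \<K>' \<subseteq> \<K> \<and> card \<K>' + 1 = card \<K> \<and> Lmarg n a \<K>' \<subseteq> Q"
  using main_aux[OF assms(3) assms(5) assms(2) assms(1) assms(4)] .

end
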